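(* Let $\succcurlyeq$ be a preference relation on bets over a propositional language $\mathcal{L}$, and let $(\Omega,t,\lambda)$ and $(\Omega',t',\lambda')$ be subjective models of uncertainty representing $\succcurlyeq$ with $t$ sound, $t'$ exact and $\lambda'$ additive. Then for all strategies $s:\mathcal{L}\to\mathbb{R}$, $\int t_\circ(s)\,\mathrm{d}\lambda=\int t'_\bullet(s)\,\mathrm{d}\lambda'$.
   Context: Let $\mathbb{P}$ be a set of propositional variables containing distinguished $\mathbf{T}$, $\mathbf{F}$, and $\mathcal{L}$ the language generated by $\neg,\land,\lor$. A bet is a finitely supported $b:\mathcal{L}\to[0,1]$ summing to $1$. A truth valuation on $\Omega$ is $t:\mathcal{L}\to2^\Omega$ with $t(\mathbf{T})=\Omega,t(\mathbf{F})=\emptyset$; exact: logically equivalent statements have equal images; sound: exact, monotone ($\phi\implies\psi\Rightarrow t(\phi)\subseteq t(\psi)$), symmetric ($t(\neg\phi)=\Omega\setminus t(\phi)$) and $\land$-distributive; for sound $t$, $t(\mathcal{L})$ is a field. A likelihood appraisal on a field $\Sigma$ is $\lambda:\Sigma\to[0,1]$ with $\lambda(\emptyset)=0,\lambda(\Omega)=1$ (not necessarily monotone); additive if finitely additive. A subjective model $(\Omega,t,\lambda)$ represents $\succcurlyeq$ if $b\succcurlyeq b'\iff\sum_\phi b(\phi)\lambda(t(\phi))\ge\sum_\phi b'(\phi)\lambda(t(\phi))$. For a likelihood appraisal $\lambda$ and measurable $x:\Omega\to\mathbb{R}$, $\int x\,\mathrm{d}\lambda=\int_{-\infty}^{\infty}\lambda(\{\omega: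 x(\omega)\ge r\})\,\mathrm{d}r$ (Lebesgue integral over $\mathbb{R}$; for $x$ of finite range this is a finite sum). A strategy is a finitely supported $s:\mathcal{L}\to\mathbb{R}$; $t_\circ(s)=\sum_{\phi}s(\phi)\mathbf{1}_{t(\phi)}$. For $t(\mathcal{L})$-measurable $x$ with finite image $\{\alpha_1>\dots>\alpha_n\}$, $\alpha_{n+1}=0$, choosing $\phi_k$ with $t(\phi_k)=x^{-1}(\{\alpha_1,\dots,\alpha_k\})$, define $\xi^t_{t'}(x)=[\sum_{k=1}^n(\alpha_k-\alpha_{k+1})\mathbf{1}_{t'(\phi_k)}]$, the $\lambda'$-a.e. equivalence class. Then $t'_\bullet(s)=\xi^t_{t'}(t_\circ(s))$; this class does not depend on the choice of the sound representation $(\Omega,t,\lambda)$, and its integral against the additive $\lambda'$ is well defined. *)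

theory Defs
  imports "HOL-Analysis.Analysis"
begin

datatype 'p form = TT | FF | Var 'p | Neg "'p form" | Conj "'p form" "'p form" | Disj "'p form" "'p form"

primrec eval :: "('p \<Rightarrow> bool) \<Rightarrow> 'p form \<Rightarrow> bool" where
  "eval v TT = True"
| "eval v FF = False"
| "eval v (Var p) = v p"
| "eval v (Neg a) = (\<not> eval v a)"
| "eval v (Conj a b) = (eval v a \<and> eval v b)"
| "eval v (Disj a b) = (eval v a \<or> eval v b)"

definition implies :: "'p form \<Rightarrow> 'p form \<Rightarrow> bool" where
  "implies a b \<longleftrightarrow> (\<forall>v. eval v a \<longrightarrow> eval v b)"

definition log_equiv :: "'p form \<Rightarrow> 'p form \<Rightarrow> bool" where
  "log_equiv a b \<longleftrightarrow> (\<forall>v. eval v a = eval v b)"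

definition truth_valuation :: "'w set \<Rightarrow> ('p form \<Rightarrow> 'w set) \<Rightarrow> bool" where
  "truth_valuation \<Omega> t \<longleftrightarrow> (\<forall>a. t a \<subseteq> \<Omega>) \<and> t TT = \<Omega> \<and> t FF = {}"

definition exact :: "'w set \<Rightarrow> ('p form \<Rightarrow> 'w set) \<Rightarrow> bool" where
  "exact \<Omega> t \<longleftrightarrow> truth_valuation \<Omega> t \<and> (\<forall>a b. log_equiv a b \<longrightarrow> t a = t b)"

definition sound :: "'w set \<Rightarrow> ('p form \<Rightarrow> 'w set) \<Rightarrow> bool" where
  "sound \<Omega> t \<longleftrightarrow> exact \<Omega> t
     \<and> (\<forall>a b. implies a b \<longrightarrow> t a \<subseteq> t b)
     \<and> (\<forall>a. t (Neg a) = \<Omega> - t a)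
     \<and> (\<forall>a b. t (Conj a b) = t a \<inter> t b)"

text \<open>Likelihood appraisal on a field (algebra) \<Sigma> of subsets of \<Omega> (not necessarily monotone).\<close>
definition likelihood_appraisal :: "'w set \<Rightarrow> 'w set set \<Rightarrow> ('w set \<Rightarrow> real) \<Rightarrow> bool" where
  "likelihood_appraisal \<Omega> \<Sigma> l \<longleftrightarrow> algebra \<Omega> \<Sigma> \<and> (\<forall>A\<in>\<Sigma>. 0 \<le> l A \<and> l A \<le> 1)
     \<and> l {} = 0 \<and> l \<Omega> = 1"

definition additive_on :: "'w set set \<Rightarrow> ('w set \<Rightarrow> real) \<Rightarrow> bool" where
  "additive_on \<Sigma> l \<longleftrightarrow> (\<forall>A\<in>\<Sigma>. \<forall>B\<in>\<Sigma>. A \<inter> B = {} \<longrightarrow> l (A \<union> B) = l A + l B)"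

definition subjective_model :: "'w set \<Rightarrow> 'w set set \<Rightarrow> ('p form \<Rightarrow> 'w set) \<Rightarrow> ('w set \<Rightarrow> real) \<Rightarrow> bool" where
  "subjective_model \<Omega> \<Sigma> t l \<longleftrightarrow> truth_valuation \<Omega> t \<and> likelihood_appraisal \<Omega> \<Sigma> l \<and> range t \<subseteq> \<Sigma>"

definition supp :: "('p form \<Rightarrow> real) \<Rightarrow> 'p form set" where
  "supp s = {a. s a \<noteq> 0}"

definition is_bet :: "('p form \<Rightarrow> real) \<Rightarrow> bool" where
  "is_bet b \<longleftrightarrow> finite (supp b) \<and> (\<forall>a. 0 \<le> b a \<and> b a \<le> 1) \<and> (\<Sum>a\<in>supp b. b a) = 1"

definition bet_value :: "('p form \<Rightarrow> 'w set) \<Rightarrow> ('w set \<Rightarrow> real) \<Rightarrow> ('p form \<Rightarrow> real) \<Rightarrow> real" where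
  "bet_value t l b = (\<Sum>a\<in>supp b. b a * l (t a))"

definition represents :: "('p form \<Rightarrow> 'w set) \<Rightarrow> ('w set \<Rightarrow> real)
     \<Rightarrow> (('p form \<Rightarrow> real) \<Rightarrow> ('p form \<Rightarrow> real) \<Rightarrow> bool) \<Rightarrow> bool" where
  "represents t l pref \<longleftrightarrow> (\<forall>b b'. is_bet b \<longrightarrow> is_bet b' \<longrightarrow>
       (pref b b' \<longleftrightarrow> bet_value t l b \<ge> bet_value t l b'))"

definition is_strategy :: "('p form \<Rightarrow> real) \<Rightarrow> bool" where
  "is_strategy s \<longleftrightarrow> finite (supp s)"

definition t_circ :: "('p form \<Rightarrow> 'w set) \<Rightarrow> ('p form \<Rightarrow> real) \<Rightarrow> 'w \<Rightarrow> real" where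
  "t_circ t s \<omega> = (\<Sum>a\<in>supp s. s a * indicator (t a) \<omega>)"

text \<open>Values of x on \<Omega> in decreasing order \<alpha>_1 > ... > \<alpha>_n (0-indexed here),
with \<alpha>_{n+1} = 0.\<close>
definition desc_vals :: "'w set \<Rightarrow> ('w \<Rightarrow> real) \<Rightarrow> real list" where
  "desc_vals \<Omega> x = rev (sorted_list_of_set (x ` \<Omega>))"

definition alpha :: "'w set \<Rightarrow> ('w \<Rightarrow> real) \<Rightarrow> nat \<Rightarrow> real" where
  "alpha \<Omega> x k = (if k < length (desc_vals \<Omega> x) then desc_vals \<Omega> x ! k else 0)"

definition lintegral_fin :: "'w set \<Rightarrow> ('w set \<Rightarrow> real) \<Rightarrow> ('w \<Rightarrow> real) \<Rightarrow> real" where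
  "lintegral_fin \<Omega> l x = (\<Sum>k<length (desc_vals \<Omega> x).
      (alpha \<Omega> x k - alpha \<Omega> x (Suc k)) * l {\<omega>\<in>\<Omega>. alpha \<Omega> x k \<le> x \<omega>})"

definition level_choice :: "'w set \<Rightarrow> ('p form \<Rightarrow> 'w set) \<Rightarrow> ('w \<Rightarrow> real) \<Rightarrow> (nat \<Rightarrow> 'p form) \<Rightarrow> bool" where
  "level_choice \<Omega> t x \<phi> \<longleftrightarrow> (\<forall>k<length (desc_vals \<Omega> x).
       t (\<phi> k) = {\<omega>\<in>\<Omega>. \<exists>j\<le>k. x \<omega> = alpha \<Omega> x j})"

text \<open>Representative of \<xi>^t_{t'}(x) for a given admissible choice \<phi>.\<close>
definition xi :: "'w set \<Rightarrow> ('w \<Rightarrow> real) \<Rightarrow> ('p form \<Rightarrow> 'v set) \<Rightarrow> (nat \<Rightarrow> 'p form) \<Rightarrow> 'v \<Rightarrow> real" where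
  "xi \<Omega> x t' \<phi> \<omega> = (\<Sum>k<length (desc_vals \<Omega> x).
      (alpha \<Omega> x k - alpha \<Omega> x (Suc k)) * indicator (t' (\<phi> k)) \<omega>)"

end

theory Submission
  imports Defs
begin


lemma desc_basic:
  assumes "k < length (desc_vals \<Omega> x)"
  shows "finite (x ` \<Omega>)" and "set (desc_vals \<Omega> x) = x ` \<Omega>"
    and "distinct (desc_vals \<Omega> x)" and "sorted_wrt (>) (desc_vals \<Omega> x)"
proof -
  show f: "finite (x ` \<Omega>)"
    using assms by (metis desc_vals_def length_rev list.size(3) not_less_zero sorted_list_of_set.fold_insort_key.infinite)
  show "set (desc_vals \<Omega> x) = x ` \<Omega>" using f by (simp add: desc_vals_def)
  show "distinct (desc_vals \<Omega> x)" by (simp add: desc_vals_def)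
  show "sorted_wrt (>) (desc_vals \<Omega> x)"
    unfolding desc_vals_def sorted_wrt_rev by (simp add: strict_sorted_list_of_set)
qed

lemma desc_lt:
  assumes "sorted_wrt (>) (ds::real list)" "i < length ds" "j < length ds"
  shows "ds ! i \<le> ds ! j \<longleftrightarrow> j \<le> i"
proof
  assume "ds ! i \<le> ds ! j" then show "j \<le> i"
    using sorted_wrt_nth_less[OF assms(1), of i j] assms by (metis linorder_not_le not_le)
next
  assume "j \<le> i" then show "ds ! i \<le> ds ! j"
    using sorted_wrt_nth_less[OF assms(1), of j i] assms by (cases "j = i") auto
qed

lemma level_le:
  assumes "k < length (desc_vals \<Omega> x)" "\<omega> \<in> \<Omega>"
  shows "alpha \<Omega> x k \<le> x \<omega> \<longleftrightarrow> (\<exists>j\<le>k. x \<omega> = alpha \<Omega> x j)"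
proof -
  let ?ds = "desc_vals \<Omega> x"
  note b = desc_basic[OF assms(1)]
  have "x \<omega> \<in> set ?ds" using b assms by auto
  then obtain i where i: "i < length ?ds" "x \<omega> = ?ds ! i" by (metis in_set_conv_nth)
  have ak: "alpha \<Omega> x k = ?ds ! k" using assms by (simp add: alpha_def)
  have "alpha \<Omega> x k \<le> x \<omega> \<longleftrightarrow> ?ds ! k \<le> ?ds ! i" unfolding ak i(2)[symmetric] ..
  also have "\<dots> \<longleftrightarrow> i \<le> k" by (rule desc_lt[OF b(4) assms(1) i(1)])
  also have "\<dots> \<longleftrightarrow> (\<exists>j\<le>k. x \<omega> = alpha \<Omega> x j)"
  proof
    assume ik: "i \<le> k"
    have "alpha \<Omega> x i = ?ds ! i" using i(1) by (simp add: alpha_def)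
    then have "x \<omega> = alpha \<Omega> x i" using i(2) by simp
    then show "\<exists>j\<le>k. x \<omega> = alpha \<Omega> x j" using ik by blast
  next
    assume "\<exists>j\<le>k. x \<omega> = alpha \<Omega> x j"
    then obtain j where j: "j \<le> k" "x \<omega> = alpha \<Omega> x j" by blast
    then have "x \<omega> = ?ds ! j" using assms by (simp add: alpha_def)
    have jl: "j < length ?ds" using j(1) assms(1) by simp
    have "?ds ! i = ?ds ! j" using i(2) \<open>x \<omega> = ?ds ! j\<close> by simp
    then have "i = j" using nth_eq_iff_index_eq[OF b(3) i(1) jl] by simp
    then show "i \<le> k" using j by simp
  qed
  finally show ?thesis .
qed



lemma fadd:
  assumes alg: "algebra \<Omega> \<Sigma>" and add: "additive_on \<Sigma> l" and l0: "l {} = 0"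
    and fin: "finite I" and meas: "\<forall>i\<in>I. B i \<in> \<Sigma>" and disj: "disjoint_family_on B I"
  shows "l (\<Union>i\<in>I. B i) = (\<Sum>i\<in>I. l (B i))"
  using fin meas disj
proof (induction I rule: finite_induct)
  case empty then show ?case using l0 by simp
next
  case (insert i I)
  have m: "(\<Union>j\<in>I. B j) \<in> \<Sigma>" using insert alg by (intro algebra.axioms(1)[THEN ring_of_sets.finite_UN]) auto
  have d: "B i \<inter> (\<Union>j\<in>I. B j) = {}" using insert.prems(2) insert.hyps(2)
    unfolding disjoint_family_on_def by auto
  have "l (\<Union>j\<in>insert i I. B j) = l (B i \<union> (\<Union>j\<in>I. B j))" by simp
  also have "\<dots> = l (B i) + l (\<Union>j\<in>I. B j)" using add m d insert.prems(1)
    unfolding additive_on_def by auto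
  also have "\<dots> = l (B i) + (\<Sum>j\<in>I. l (B j))" using insert
    by (simp add: disjoint_family_on_mono[of I "insert i I"] subset_insertI)
  finally show ?case using insert.hyps by simp
qed

lemma telescope_aux:
  fixes a L :: "nat \<Rightarrow> real"
  shows "(\<Sum>k<n. (a k - a (Suc k)) * (\<Sum>j\<le>k. L j)) = (\<Sum>j<n. (a j - a n) * L j)"
proof (induction n)
  case 0 then show ?case by simp
next
  case (Suc n)
  have "(\<Sum>k<Suc n. (a k - a (Suc k)) * (\<Sum>j\<le>k. L j))
      = (\<Sum>j<n. (a j - a n) * L j) + (a n - a (Suc n)) * (\<Sum>j<Suc n. L j)"
    using Suc by (simp add: lessThan_Suc_atMost[symmetric])
  also have "\<dots> = (\<Sum>j<Suc n. (a j - a (Suc n)) * L j)"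
    by (simp add: sum_distrib_left algebra_simps sum.distrib sum_subtractf del: sum.lessThan_Suc) (simp add: sum.lessThan_Suc algebra_simps sum_distrib_left sum_subtractf sum.distrib)
  finally show ?case .
qed

lemma layer:
  assumes alg: "algebra \<Omega> \<Sigma>" and add: "additive_on \<Sigma> l" and l0: "l {} = 0"
    and meas: "\<forall>v. {\<omega>\<in>\<Omega>. y \<omega> = v} \<in> \<Sigma>"
  shows "lintegral_fin \<Omega> l y = (\<Sum>v\<in>y`\<Omega>. v * l {\<omega>\<in>\<Omega>. y \<omega> = v})"
proof (cases "length (desc_vals \<Omega> y) = 0")
  case True
  then have "desc_vals \<Omega> y = []" by simp
  then have "sorted_list_of_set (y ` \<Omega>) = []" by (simp add: desc_vals_def)
  have L0: "lintegral_fin \<Omega> l y = 0" unfolding lintegral_fin_def using True by simp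
  show ?thesis
  proof (cases "finite (y ` \<Omega>)")
    case True
    then have "y ` \<Omega> = {}" using sorted_list_of_set_eq_Nil_iff[OF True] \<open>sorted_list_of_set (y ` \<Omega>) = []\<close> by simp
    then show ?thesis using L0 by simp
  next
    case False
    then show ?thesis using L0 by simp
  qed
next
  case False
  let ?ds = "desc_vals \<Omega> y" let ?n = "length ?ds"
  let ?L = "\<lambda>j. l {\<omega>\<in>\<Omega>. y \<omega> = ?ds ! j}"
  note b = desc_basic[of 0 \<Omega> y]
  have n: "0 < ?n" using False by simp
  have set_eq: "{\<omega>\<in>\<Omega>. alpha \<Omega> y k \<le> y \<omega>} = (\<Union>j\<in>{..k}. {\<omega>\<in>\<Omega>. y \<omega> = ?ds ! j})"
    if "k < ?n" for k
  proof -
    have aj: "alpha \<Omega> y j = ?ds ! j" if "j \<le> k" for j using that \<open>k < ?n\<close> by (simp add: alpha_def)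
    show ?thesis
    proof (rule set_eqI)
      fix \<omega>
      show "\<omega> \<in> {\<omega>\<in>\<Omega>. alpha \<Omega> y k \<le> y \<omega>} \<longleftrightarrow> \<omega> \<in> (\<Union>j\<in>{..k}. {\<omega>\<in>\<Omega>. y \<omega> = ?ds ! j})"
      proof (cases "\<omega> \<in> \<Omega>")
        case True
        have e: "(\<exists>j\<le>k. y \<omega> = alpha \<Omega> y j) \<longleftrightarrow> (\<exists>j\<le>k. y \<omega> = ?ds ! j)"
        proof
          assume "\<exists>j\<le>k. y \<omega> = alpha \<Omega> y j"
          then obtain j where "j \<le> k" "y \<omega> = alpha \<Omega> y j" by blast
          then show "\<exists>j\<le>k. y \<omega> = ?ds ! j" using aj[of j] by auto
        next
          assume "\<exists>j\<le>k. y \<omega> = ?ds ! j"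
          then obtain j where "j \<le> k" "y \<omega> = ?ds ! j" by blast
          then show "\<exists>j\<le>k. y \<omega> = alpha \<Omega> y j" using aj[of j] by auto
        qed
        have "alpha \<Omega> y k \<le> y \<omega> \<longleftrightarrow> (\<exists>j\<le>k. y \<omega> = ?ds ! j)"
          using level_le[OF that True] e by (rule trans)
        then show ?thesis using True by auto
      qed auto
    qed
  qed
  have lk: "l {\<omega>\<in>\<Omega>. alpha \<Omega> y k \<le> y \<omega>} = (\<Sum>j\<le>k. ?L j)" if "k < ?n" for k
    unfolding set_eq[OF that]
  proof (rule fadd[OF alg add l0])
    show "disjoint_family_on (\<lambda>j. {\<omega> \<in> \<Omega>. y \<omega> = ?ds ! j}) {..k}"
      unfolding disjoint_family_on_def
    proof (intro ballI impI)
      fix i j assume ij: "i \<in> {..k}" "j \<in> {..k}" "i \<noteq> j"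
      then have "i < ?n" "j < ?n" using that by auto
      then have "?ds ! i \<noteq> ?ds ! j" using nth_eq_iff_index_eq[OF b(3)[OF n]] ij(3) by simp
      then show "{\<omega> \<in> \<Omega>. y \<omega> = ?ds ! i} \<inter> {\<omega> \<in> \<Omega>. y \<omega> = ?ds ! j} = {}" by auto
    qed
  qed (use meas in auto)
  have "lintegral_fin \<Omega> l y = (\<Sum>k<?n. (alpha \<Omega> y k - alpha \<Omega> y (Suc k)) * (\<Sum>j\<le>k. ?L j))"
    unfolding lintegral_fin_def by (rule sum.cong[OF refl]) (simp add: lk)
  also have "\<dots> = (\<Sum>j<?n. (alpha \<Omega> y j - alpha \<Omega> y ?n) * ?L j)" by (rule telescope_aux)
  also have "\<dots> = (\<Sum>j<?n. ?ds ! j * ?L j)" by (rule sum.cong[OF refl]) (simp add: alpha_def)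
  also have "\<dots> = (\<Sum>v\<in>set ?ds. v * l {\<omega>\<in>\<Omega>. y \<omega> = v})"
  proof (rule sum.reindex_bij_betw)
    show "bij_betw ((!) ?ds) {..<?n} (set ?ds)"
      by (rule bij_betw_nth[OF b(3)[OF n] refl refl])
  qed
  also have "\<dots> = (\<Sum>v\<in>y`\<Omega>. v * l {\<omega>\<in>\<Omega>. y \<omega> = v})" using b(2)[OF n] by simp
  finally show ?thesis .
qed



lemma simple_int:
  assumes alg: "algebra \<Omega> \<Sigma>" and add: "additive_on \<Sigma> l" and l0: "l {} = 0"
    and finK: "finite K" and measA: "\<forall>k\<in>K. A k \<in> \<Sigma>"
    and ydef: "y = (\<lambda>\<omega>. \<Sum>k\<in>K. c k * indicator (A k) \<omega>)"
  shows "\<forall>v. {\<omega>\<in>\<Omega>. y \<omega> = v} \<in> \<Sigma>"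
    and "(\<Sum>v\<in>y`\<Omega>. v * l {\<omega>\<in>\<Omega>. y \<omega> = v}) = (\<Sum>k\<in>K. (c k :: real) * l (A k))"
proof -
  interpret algebra \<Omega> \<Sigma> by (rule alg)
  define atom where "atom S = {\<omega>\<in>\<Omega>. \<forall>k\<in>K. \<omega> \<in> A k \<longleftrightarrow> k \<in> S}" for S
  define val where "val S = (\<Sum>k\<in>S. c k)" for S
  have AO: "A k \<subseteq> \<Omega>" if "k \<in> K" for k using measA that sets_into_space by auto
  have atom_meas: "atom S \<in> \<Sigma>" if "S \<subseteq> K" for S
  proof -
    have "atom S = \<Omega> - (\<Union>k\<in>K. if k \<in> S then \<Omega> - A k else A k)"
      unfolding atom_def using AO by auto
    also have "\<dots> \<in> \<Sigma>" using measA finK by (intro Diff top finite_UN) auto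
    finally show ?thesis .
  qed
  have yatom: "y \<omega> = val S" if "\<omega> \<in> atom S" "S \<subseteq> K" for \<omega> S
  proof -
    have "y \<omega> = (\<Sum>k\<in>K. if k \<in> S then c k else 0)"
      unfolding ydef using that by (intro sum.cong) (auto simp: atom_def indicator_def)
    also have "\<dots> = sum c (K \<inter> S)" using finK by (simp add: sum.inter_restrict)
    also have "K \<inter> S = S" using that by auto
    finally show ?thesis by (simp add: val_def)
  qed
  have inatom: "\<omega> \<in> atom {k\<in>K. \<omega> \<in> A k}" if "\<omega> \<in> \<Omega>" for \<omega>
    using that by (auto simp: atom_def)
  have atom_id: "S = {k\<in>K. \<omega> \<in> A k}" if "\<omega> \<in> atom S" "S \<subseteq> K" for \<omega> S
    using that unfolding atom_def by auto
  have disj: "disjoint_family_on atom P" if "P \<subseteq> Pow K" for P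
    unfolding disjoint_family_on_def
  proof (intro ballI impI)
    fix S S' assume S: "S \<in> P" "S' \<in> P" "S \<noteq> S'"
    show "atom S \<inter> atom S' = {}"
    proof (rule ccontr)
      assume "atom S \<inter> atom S' \<noteq> {}"
      then obtain \<omega> where w: "\<omega> \<in> atom S" "\<omega> \<in> atom S'" by blast
      have "S \<subseteq> K" "S' \<subseteq> K" using S that by auto
      then have "S = {k\<in>K. \<omega> \<in> A k}" "S' = {k\<in>K. \<omega> \<in> A k}"
        using atom_id[OF w(1)] atom_id[OF w(2)] by auto
      then show False using S by simp
    qed
  qed
  have A_eq: "A k = (\<Union>S\<in>{S\<in>Pow K. k \<in> S}. atom S)" if "k \<in> K" for k
  proof
    show "A k \<subseteq> (\<Union>S\<in>{S\<in>Pow K. k \<in> S}. atom S)"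
    proof
      fix \<omega> assume "\<omega> \<in> A k"
      then show "\<omega> \<in> (\<Union>S\<in>{S\<in>Pow K. k \<in> S}. atom S)"
        using inatom[of \<omega>] AO that by (intro UN_I[of "{k\<in>K. \<omega> \<in> A k}"]) auto
    qed
  qed (use that in \<open>auto simp: atom_def\<close>)
  have lev_eq: "{\<omega>\<in>\<Omega>. y \<omega> = v} = (\<Union>S\<in>{S\<in>Pow K. val S = v}. atom S)" for v
  proof
    show "{\<omega>\<in>\<Omega>. y \<omega> = v} \<subseteq> (\<Union>S\<in>{S\<in>Pow K. val S = v}. atom S)"
    proof
      fix \<omega> assume w: "\<omega> \<in> {\<omega>\<in>\<Omega>. y \<omega> = v}"
      then have "y \<omega> = val {k\<in>K. \<omega> \<in> A k}" using yatom[OF inatom] by auto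
      then show "\<omega> \<in> (\<Union>S\<in>{S\<in>Pow K. val S = v}. atom S)"
        using inatom[of \<omega>] w by (intro UN_I[of "{k\<in>K. \<omega> \<in> A k}"]) auto
    qed
  next
    show "(\<Union>S\<in>{S\<in>Pow K. val S = v}. atom S) \<subseteq> {\<omega>\<in>\<Omega>. y \<omega> = v}"
    proof
      fix \<omega> assume "\<omega> \<in> (\<Union>S\<in>{S\<in>Pow K. val S = v}. atom S)"
      then obtain S where S: "S \<in> Pow K" "val S = v" "\<omega> \<in> atom S" by blast
      have "y \<omega> = v" using yatom[OF S(3)] S by simp
      moreover have "\<omega> \<in> \<Omega>" using S(3) unfolding atom_def by blast
      ultimately show "\<omega> \<in> {\<omega>\<in>\<Omega>. y \<omega> = v}" by simp
    qed
  qed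
  show lev_meas: "\<forall>v. {\<omega>\<in>\<Omega>. y \<omega> = v} \<in> \<Sigma>"
    unfolding lev_eq using finK atom_meas by (intro allI finite_UN) auto
  have finPK: "finite (Pow K)" using finK by simp
  have lA: "l (A k) = (\<Sum>S\<in>{S\<in>Pow K. k \<in> S}. l (atom S))" if "k \<in> K" for k
    unfolding A_eq[OF that] using finPK atom_meas by (intro fadd[OF alg add l0] disj) auto
  have llev: "l {\<omega>\<in>\<Omega>. y \<omega> = v} = (\<Sum>S\<in>{S\<in>Pow K. val S = v}. l (atom S))" for v
    unfolding lev_eq using finPK atom_meas by (intro fadd[OF alg add l0] disj) auto
  have Vsub: "y ` \<Omega> \<subseteq> val ` Pow K"
  proof
    fix v assume "v \<in> y ` \<Omega>"
    then obtain \<omega> where w: "\<omega> \<in> \<Omega>" "v = y \<omega>" by blast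
    have "v = val {k\<in>K. \<omega> \<in> A k}" using w yatom[OF inatom[OF w(1)]] by simp
    moreover have "{k\<in>K. \<omega> \<in> A k} \<in> Pow K" by auto
    ultimately show "v \<in> val ` Pow K" by (rule image_eqI)
  qed
  have finV: "finite (y ` \<Omega>)" using finite_subset[OF Vsub finite_imageI[OF finPK]] .
  have "(\<Sum>k\<in>K. c k * l (A k)) = (\<Sum>k\<in>K. \<Sum>S\<in>{S\<in>Pow K. k \<in> S}. c k * l (atom S))"
    using lA by (simp add: sum_distrib_left)
  also have "\<dots> = (\<Sum>S\<in>Pow K. \<Sum>k\<in>{k\<in>K. k \<in> S}. c k * l (atom S))"
    by (rule sum.swap_restrict[OF finK finPK, of "\<lambda>k S. c k * l (atom S)" "\<lambda>k S. k \<in> S"])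
  also have "\<dots> = (\<Sum>S\<in>Pow K. val S * l (atom S))"
    unfolding val_def by (intro sum.cong refl) (auto simp: sum_distrib_right intro!: sum.cong)
  also have "\<dots> = (\<Sum>S\<in>{S\<in>Pow K. val S \<in> y ` \<Omega>}. val S * l (atom S))"
  proof (rule sum.mono_neutral_right[OF finPK])
    show "\<forall>S\<in>Pow K - {S\<in>Pow K. val S \<in> y ` \<Omega>}. val S * l (atom S) = 0"
    proof
      fix S assume S: "S \<in> Pow K - {S\<in>Pow K. val S \<in> y ` \<Omega>}"
      have "atom S = {}"
      proof (rule ccontr)
        assume "atom S \<noteq> {}"
        then obtain \<omega> where w: "\<omega> \<in> atom S" by blast
        have SK: "S \<subseteq> K" using S by blast
        have "val S = y \<omega>" using yatom[OF w SK] by (rule sym)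
        moreover have "\<omega> \<in> \<Omega>" using w unfolding atom_def by blast
        ultimately have vS: "val S \<in> y ` \<Omega>" by simp
        have "S \<notin> {S\<in>Pow K. val S \<in> y ` \<Omega>}" using S by (rule DiffE)
        then show False using vS SK by simp
      qed
      then show "val S * l (atom S) = 0" using l0 by simp
    qed
  qed auto
  also have "\<dots> = (\<Sum>v\<in>y`\<Omega>. \<Sum>S\<in>{S\<in>{S\<in>Pow K. val S \<in> y ` \<Omega>}. val S = v}. val S * l (atom S))"
    by (rule sum.group[symmetric]) (use finPK finV in auto)
  also have "\<dots> = (\<Sum>v\<in>y`\<Omega>. v * l {\<omega>\<in>\<Omega>. y \<omega> = v})"
  proof (rule sum.cong[OF refl])
    fix v assume v: "v \<in> y ` \<Omega>"
    have "{S\<in>{S\<in>Pow K. val S \<in> y ` \<Omega>}. val S = v} = {S\<in>Pow K. val S = v}" using v by auto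
    then show "(\<Sum>S\<in>{S\<in>{S\<in>Pow K. val S \<in> y ` \<Omega>}. val S = v}. val S * l (atom S)) = v * l {\<omega>\<in>\<Omega>. y \<omega> = v}"
      by (simp add: llev sum_distrib_left)
  qed
  finally show "(\<Sum>v\<in>y`\<Omega>. v * l {\<omega>\<in>\<Omega>. y \<omega> = v}) = (\<Sum>k\<in>K. c k * l (A k))" by simp
qed


lemma bet_value_sup:
  assumes "finite F" "supp b \<subseteq> F"
  shows "bet_value t l b = (\<Sum>c\<in>F. b c * l (t c))"
  unfolding bet_value_def
  by (rule sum.mono_neutral_left) (use assms in \<open>auto simp: supp_def\<close>)

lemma is_betI:
  assumes "finite F" "supp b \<subseteq> F" "\<forall>a. 0 \<le> b a \<and> b a \<le> 1" "(\<Sum>c\<in>F. b c) = 1"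
  shows "is_bet b"
proof -
  have "(\<Sum>c\<in>supp b. b c) = (\<Sum>c\<in>F. b c)"
    by (rule sum.mono_neutral_left) (use assms in \<open>auto simp: supp_def\<close>)
  then show ?thesis using assms finite_subset unfolding is_bet_def by auto
qed

lemma rep_eq:
  fixes a :: "'p form"
  assumes sm: "subjective_model \<Omega> \<Sigma> t l" and rep: "represents t l pref"
    and sm': "subjective_model \<Omega>' \<Sigma>' t' l'" and rep': "represents t' l' pref"
  shows "l (t a) = l' (t' a)"
proof -
  define p where "p = l (t a)"
  have tv: "truth_valuation \<Omega> t" "likelihood_appraisal \<Omega> \<Sigma> l" "range t \<subseteq> \<Sigma>"
    using sm unfolding subjective_model_def by auto
  have tv': "truth_valuation \<Omega>' t'" "likelihood_appraisal \<Omega>' \<Sigma>' l'"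
    using sm' unfolding subjective_model_def by auto
  have "t a \<in> \<Sigma>" using tv(3) by auto
  then have p01: "0 \<le> p" "p \<le> 1" using tv(2) unfolding likelihood_appraisal_def p_def by auto
  define b1 where "b1 = (\<lambda>c. if c = a then 1 else (0::real))"
  define b2 where "b2 = (\<lambda>c::'p form. if c = TT then p else if c = FF then 1 - p else (0::real))"
  have s1: "supp b1 \<subseteq> {a}" by (auto simp: supp_def b1_def)
  have s2: "supp b2 \<subseteq> {TT, FF}" by (auto simp: supp_def b2_def)
  have bet1: "is_bet b1" by (rule is_betI[OF _ s1]) (auto simp: b1_def)
  have bet2: "is_bet b2" by (rule is_betI[OF _ s2]) (use p01 in \<open>auto simp: b2_def\<close>)
  have "bet_value t l b1 = (\<Sum>c\<in>{a}. b1 c * l (t c))" by (rule bet_value_sup[OF _ s1]) simp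
  moreover have "bet_value t' l' b1 = (\<Sum>c\<in>{a}. b1 c * l' (t' c))" by (rule bet_value_sup[OF _ s1]) simp
  ultimately have v1: "bet_value t l b1 = p" "bet_value t' l' b1 = l' (t' a)"
    by (simp_all add: b1_def p_def)
  have lt: "l (t TT) = 1" "l (t FF) = 0" using tv unfolding truth_valuation_def likelihood_appraisal_def by auto
  have lt': "l' (t' TT) = 1" "l' (t' FF) = 0" using tv' unfolding truth_valuation_def likelihood_appraisal_def by auto
  have "bet_value t l b2 = (\<Sum>c\<in>{TT,FF}. b2 c * l (t c))" by (rule bet_value_sup[OF _ s2]) simp
  moreover have "bet_value t' l' b2 = (\<Sum>c\<in>{TT,FF}. b2 c * l' (t' c))" by (rule bet_value_sup[OF _ s2]) simp
  ultimately have v2: "bet_value t l b2 = p" "bet_value t' l' b2 = p"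
    by (simp_all add: b2_def lt lt')
  have "pref b1 b2" "pref b2 b1" using rep bet1 bet2 v1 v2 unfolding represents_def by auto
  then have "bet_value t' l' b1 \<ge> bet_value t' l' b2" "bet_value t' l' b2 \<ge> bet_value t' l' b1"
    using rep' bet1 bet2 unfolding represents_def by auto
  then show ?thesis using v1 v2 p_def by simp
qed

theorem proposition9:
  fixes pref :: "('p form \<Rightarrow> real) \<Rightarrow> ('p form \<Rightarrow> real) \<Rightarrow> bool"
    and \<Omega> :: "'w set" and \<Sigma> :: "'w set set" and t :: "'p form \<Rightarrow> 'w set" and l :: "'w set \<Rightarrow> real"
    and \<Omega>' :: "'v set" and \<Sigma>' :: "'v set set" and t' :: "'p form \<Rightarrow> 'v set" and l' :: "'v set \<Rightarrow> real"
  assumes "subjective_model \<Omega> \<Sigma> t l" and "represents t l pref"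
    and "subjective_model \<Omega>' \<Sigma>' t' l'" and "represents t' l' pref"
    and "sound \<Omega> t" and "exact \<Omega>' t'" and "additive_on \<Sigma>' l'"
    and "is_strategy s"
    and "level_choice \<Omega> t (t_circ t s) \<phi>"
  shows "lintegral_fin \<Omega> l (t_circ t s) = lintegral_fin \<Omega>' l' (xi \<Omega> (t_circ t s) t' \<phi>)"
proof -
  define x where "x = t_circ t s"
  define n where "n = length (desc_vals \<Omega> x)"
  define c where "c k = alpha \<Omega> x k - alpha \<Omega> x (Suc k)" for k
  define y where "y = xi \<Omega> x t' \<phi>"
  have alg': "algebra \<Omega>' \<Sigma>'" and l0': "l' {} = 0" and rt': "range t' \<subseteq> \<Sigma>'"
    using assms(3) unfolding subjective_model_def likelihood_appraisal_def by auto
  have lc: "t (\<phi> k) = {\<omega>\<in>\<Omega>. \<exists>j\<le>k. x \<omega> = alpha \<Omega> x j}" if "k < n" for k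
    using assms(9) that unfolding level_choice_def x_def n_def by auto
  have "lintegral_fin \<Omega> l x = (\<Sum>k<n. c k * l (t (\<phi> k)))"
    unfolding lintegral_fin_def n_def[symmetric] c_def
  proof (rule sum.cong[OF refl])
    fix k assume "k \<in> {..<n}"
    then have k: "k < length (desc_vals \<Omega> x)" by (simp add: n_def)
    have "{\<omega>\<in>\<Omega>. alpha \<Omega> x k \<le> x \<omega>} = t (\<phi> k)"
      unfolding lc[OF k[folded n_def]] using level_le[OF k] by blast
    then show "(alpha \<Omega> x k - alpha \<Omega> x (Suc k)) * l {\<omega>\<in>\<Omega>. alpha \<Omega> x k \<le> x \<omega>}
        = (alpha \<Omega> x k - alpha \<Omega> x (Suc k)) * l (t (\<phi> k))" by simp
  qed
  also have "\<dots> = (\<Sum>k<n. c k * l' (t' (\<phi> k)))"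
    using rep_eq[OF assms(1-4)] by simp
  finally have L: "lintegral_fin \<Omega> l x = (\<Sum>k<n. c k * l' (t' (\<phi> k)))" .
  have yd: "y = (\<lambda>\<omega>. \<Sum>k\<in>{..<n}. c k * indicator (t' (\<phi> k)) \<omega>)"
    unfolding y_def xi_def n_def c_def by simp
  note si = simple_int[OF alg' assms(7) l0' _ _ yd]
  have "(\<Sum>k<n. c k * l' (t' (\<phi> k))) = (\<Sum>v\<in>y`\<Omega>'. v * l' {\<omega>\<in>\<Omega>'. y \<omega> = v})"
  proof -
    have "\<forall>k\<in>{..<n}. t' (\<phi> k) \<in> \<Sigma>'" using rt' by auto
    from si(2)[OF finite_lessThan this] show ?thesis by (rule sym)
  qed
  also have "\<dots> = lintegral_fin \<Omega>' l' y"
  proof -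
    have "\<forall>k\<in>{..<n}. t' (\<phi> k) \<in> \<Sigma>'" using rt' by auto
    from layer[OF alg' assms(7) l0' si(1)[OF finite_lessThan this]] show ?thesis by (rule sym)
  qed
  finally show ?thesis using L unfolding x_def y_def by simp
qed


end
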